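(* Let $R$ be a generalized Rickart $*$-ring and let $B$ be a $*$-subring of $R$ such that $B=B''$. Then (1) if $x\in B$, then $GRP(x)\in B$ (where $GRP(x)$ is a generalized right projection of $x$ in $R$); and (2) $B$ is a generalized Rickart $*$-ring.
   Context: A $*$-ring is an associative ring $R$ with an involution $x\mapsto x^*$ (additive, $(xy)^*=y^*x^*$, $x^{**}=x$); a $*$-subring is a subring closed under $*$. A projection is an element $e$ with $e=e^*=e^2$. For a nonempty $S\subseteq R$, the commutant is $S'=\{x\in R: xs=sx \text{ for all } s\in S\}$ and $S''=(S')'$. For $a$ in a ring $T$, $r(a)=\{b\in T: ab=0\}$. A $*$-ring $T$ is a generalized Rickart $*$-ring if for every $x\in T$ there exist a positive integer $n$ and a projection $g\in T$ with $r(x^n)=gT$. A projection $e\in R$ is a generalized right projection of $x\in R$, written $GRP(x)=e$, if there exists $n\in\mathbb N$ with $x^ne=x^n$ and, for all $y\in R$, $x^ny=0$ implies $ey=0$. *)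

theory Defs
  imports Main
begin

text \<open>Rings are associative, not necessarily unital (type class ring).
  The involution is an explicit function star on the ambient ring R (the type).\<close>

definition involution :: "('a::ring \<Rightarrow> 'a) \<Rightarrow> bool" where
  "involution star \<longleftrightarrow>
     (\<forall>x y. star (x + y) = star x + star y) \<and>
     (\<forall>x y. star (x * y) = star y * star x) \<and>
     (\<forall>x. star (star x) = x)"

definition is_subring :: "'a::ring set \<Rightarrow> bool" where
  "is_subring B \<longleftrightarrow> 0 \<in> B \<and> (\<forall>x\<in>B. \<forall>y\<in>B. x + y \<in> B \<and> x - y \<in> B \<and> x * y \<in> B)"

definition star_subring :: "('a::ring \<Rightarrow> 'a) \<Rightarrow> 'a set \<Rightarrow> bool" where
  "star_subring star B \<longleftrightarrow> is_subring B \<and> (\<forall>x\<in>B. star x \<in> B)"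

text \<open>Positive powers in a possibly non-unital ring: ppow x n = x^n for n \<ge> 1
  (the value at n = 0 is never used).\<close>
fun ppow :: "'a::ring \<Rightarrow> nat \<Rightarrow> 'a" where
  "ppow x 0 = 0"
| "ppow x (Suc 0) = x"
| "ppow x (Suc (Suc n)) = x * ppow x (Suc n)"

definition projection :: "('a::ring \<Rightarrow> 'a) \<Rightarrow> 'a \<Rightarrow> bool" where
  "projection star e \<longleftrightarrow> e = star e \<and> e * e = e"

definition commutant :: "'a::ring set \<Rightarrow> 'a set" where
  "commutant S = {x. \<forall>s\<in>S. x * s = s * x}"

definition rann :: "'a::ring set \<Rightarrow> 'a \<Rightarrow> 'a set" where
  "rann T a = {b \<in> T. a * b = 0}"

definition gen_rickart :: "('a::ring \<Rightarrow> 'a) \<Rightarrow> 'a set \<Rightarrow> bool" where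
  "gen_rickart star T \<longleftrightarrow>
     (\<forall>x\<in>T. \<exists>n>0. \<exists>g\<in>T. projection star g \<and> rann T (ppow x n) = (\<lambda>t. g * t) ` T)"

definition is_GRP :: "('a::ring \<Rightarrow> 'a) \<Rightarrow> 'a \<Rightarrow> 'a \<Rightarrow> bool" where
  "is_GRP star x e \<longleftrightarrow> projection star e \<and>
     (\<exists>n>0. ppow x n * e = ppow x n \<and> (\<forall>y. ppow x n * y = 0 \<longrightarrow> e * y = 0))"

end

theory Submission
  imports Defs
begin

lemma ppow_ann:
  fixes v :: "'a::ring"
  assumes "\<forall>t. v * t = 0" "n > 0"
  shows "ppow v n * t = 0"
  using assms
proof (induction v n arbitrary: t rule: ppow.induct)
  case (1 x) then show ?case by simp
next
  case (2 x) then show ?case by simp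
next
  case (3 x n) then show ?case by (simp add: mult.assoc)
qed

lemma inv_facts:
  assumes "involution star"
  shows "star (x * y) = star y * star x" "star (star x) = x"
  using assms unfolding involution_def by auto

lemma ann_zero:
  fixes star :: "'a::ring \<Rightarrow> 'a"
  assumes inv: "involution star" and gr: "gen_rickart star (UNIV :: 'a set)"
    and v: "\<forall>t. (v::'a) * t = 0"
  shows "v = 0"
proof -
  obtain n g where n: "n > 0" and pg: "projection star g"
    and r: "rann UNIV (ppow v n) = (\<lambda>t. g * t) ` UNIV"
    using gr unfolding gen_rickart_def by blast
  have "star v \<in> rann UNIV (ppow v n)"
    unfolding rann_def using ppow_ann[OF v n] by simp
  then obtain s where s: "star v = g * s" using r by auto
  have "v = star (g * s)" using s inv_facts[OF inv] by metis
  also have "\<dots> = star s * star g" using inv_facts[OF inv] by simp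
  also have "\<dots> = star s * g" using pg unfolding projection_def by metis
  finally have vv: "v = star s * g" .
  have "v = star s * (g * g)" using vv pg unfolding projection_def by simp
  also have "\<dots> = v * g" using vv by (simp add: mult.assoc)
  also have "\<dots> = 0" using v by simp
  finally show ?thesis .
qed

lemma ppow_in:
  assumes "is_subring B" "x \<in> B"
  shows "ppow x n \<in> B"
  using assms
  by (induction x n rule: ppow.induct) (auto simp: is_subring_def)

lemma keyA:
  fixes star :: "'a::ring \<Rightarrow> 'a"
  assumes inv: "involution star" and gr: "gen_rickart star (UNIV :: 'a set)"
    and c: "(u::'a) * p = p * u" and pe: "p * e = p" and ann: "\<forall>y. p * y = 0 \<longrightarrow> e * y = 0"
  shows "e * u = e * u * e"
proof -
  have "\<forall>t. (e * u - e * u * e) * t = 0"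
  proof
    fix t
    have "p * (t - e * t) = 0" using pe by (simp add: algebra_simps mult.assoc[symmetric])
    hence "p * (u * (t - e * t)) = 0" using c by (metis mult.assoc mult_zero_right)
    hence "e * (u * (t - e * t)) = 0" using ann by blast
    thus "(e * u - e * u * e) * t = 0" by (simp add: algebra_simps)
  qed
  thus ?thesis using ann_zero[OF inv gr] by (metis eq_iff_diff_eq_0)
qed

lemma keyB:
  fixes star :: "'a::ring \<Rightarrow> 'a"
  assumes inv: "involution star" and gr: "gen_rickart star (UNIV :: 'a set)"
    and c: "(u::'a) * p = p * u" and gg: "g * g = g"
    and r: "rann UNIV p = (\<lambda>t. g * t) ` UNIV"
  shows "g * u * g = u * g"
proof -
  have "\<forall>t. (g * u * g - u * g) * t = 0"
  proof
    fix t
    have "g * t \<in> rann UNIV p" using r by auto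
    hence "p * (g * t) = 0" unfolding rann_def by simp
    hence "p * (u * g * t) = 0" using c by (metis mult.assoc mult_zero_right)
    hence "u * g * t \<in> rann UNIV p" unfolding rann_def by simp
    then obtain s where s: "u * g * t = g * s" using r by auto
    have "g * (u * g * t) = u * g * t" using s gg by (metis mult.assoc)
    thus "(g * u * g - u * g) * t = 0" by (simp add: algebra_simps mult.assoc)
  qed
  thus ?thesis using ann_zero[OF inv gr] by (metis eq_iff_diff_eq_0)
qed

lemma comm_star:
  assumes inv: "involution star" and sb: "star_subring star B"
    and u: "u \<in> commutant B"
  shows "star u \<in> commutant B"
  unfolding commutant_def
proof
  show "\<forall>s\<in>B. star u * s = s * star u"
  proof
    fix s assume "s \<in> B"
    hence "star s \<in> B" using sb unfolding star_subring_def by auto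
    hence "u * star s = star s * u" using u unfolding commutant_def by auto
    hence "star (u * star s) = star (star s * u)" by simp
    thus "star u * s = s * star u" using inv_facts[OF inv] by simp
  qed
qed

theorem mainTheorem5:
  fixes star :: "'a::ring \<Rightarrow> 'a" and B :: "'a set"
  assumes "involution star"
    and "gen_rickart star (UNIV :: 'a set)"
    and "star_subring star B"
    and "B = commutant (commutant B)"
  shows "(\<forall>x\<in>B. \<forall>e. is_GRP star x e \<longrightarrow> e \<in> B) \<and> gen_rickart star B"
proof -
  note inv = assms(1) and gr = assms(2) and sb = assms(3)
  have sub: "is_subring B" using sb unfolding star_subring_def by auto
  have pc: "u * ppow x n = ppow x n * u" if "x \<in> B" "u \<in> commutant B" for x u n
    using ppow_in[OF sub that(1)] that(2) unfolding commutant_def by auto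
  have P1: "\<forall>x\<in>B. \<forall>e. is_GRP star x e \<longrightarrow> e \<in> B"
  proof (intro ballI allI impI)
    fix x e assume x: "x \<in> B" and G: "is_GRP star x e"
    then obtain n where pe: "ppow x n * e = ppow x n"
      and ann: "\<forall>y. ppow x n * y = 0 \<longrightarrow> e * y = 0" unfolding is_GRP_def by blast
    have ps: "e = star e" using G unfolding is_GRP_def projection_def by blast
    have "e \<in> commutant (commutant B)" unfolding commutant_def[of "commutant B"]
    proof (intro CollectI ballI)
      fix u assume u: "u \<in> commutant B"
      have su: "star u \<in> commutant B" using comm_star[OF inv sb u] .
      have a1: "e * u = e * u * e" using keyA[OF inv gr pc[OF x u] pe ann] .
      have a2: "e * star u = e * star u * e" using keyA[OF inv gr pc[OF x su] pe ann] .
      hence "star (e * star u) = star (e * star u * e)" by simp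
      hence "u * star e = star e * u * star e" using inv_facts[OF inv] by (simp add: mult.assoc)
      hence "u * e = e * u * e" using ps by simp
      thus "e * u = u * e" using a1 by metis
    qed
    thus "e \<in> B" using assms(4) by simp
  qed
  have P2: "gen_rickart star B" unfolding gen_rickart_def
  proof
    fix x assume x: "x \<in> B"
    obtain n g where n: "n > 0" and pg: "projection star g"
      and r: "rann UNIV (ppow x n) = (\<lambda>t. g * t) ` UNIV"
      using gr x unfolding gen_rickart_def by blast
    have gg: "g * g = g" and ps: "g = star g" using pg unfolding projection_def by auto
    have "g \<in> commutant (commutant B)" unfolding commutant_def[of "commutant B"]
    proof (intro CollectI ballI)
      fix u assume u: "u \<in> commutant B"
      have su: "star u \<in> commutant B" using comm_star[OF inv sb u] .
      have a1: "g * u * g = u * g" using keyB[OF inv gr pc[OF x u] gg r] .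
      have a2: "g * star u * g = star u * g" using keyB[OF inv gr pc[OF x su] gg r] .
      hence "star (g * star u * g) = star (star u * g)" by simp
      hence "star g * u * star g = star g * u" using inv_facts[OF inv] by (simp add: mult.assoc)
      hence "g * u * g = g * u" using ps by simp
      thus "g * u = u * g" using a1 by metis
    qed
    hence gB: "g \<in> B" using assms(4) by simp
    have "rann B (ppow x n) = (\<lambda>t. g * t) ` B"
    proof
      show "rann B (ppow x n) \<subseteq> (\<lambda>t. g * t) ` B"
      proof
        fix b assume b: "b \<in> rann B (ppow x n)"
        hence bB: "b \<in> B" and "b \<in> rann UNIV (ppow x n)" unfolding rann_def by auto
        then obtain s where "b = g * s" using r by auto
        hence "b = g * b" using gg by (metis mult.assoc)
        thus "b \<in> (\<lambda>t. g * t) ` B" using bB by blast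
      qed
    next
      show "(\<lambda>t. g * t) ` B \<subseteq> rann B (ppow x n)"
      proof
        fix y assume "y \<in> (\<lambda>t. g * t) ` B"
        then obtain b where b: "b \<in> B" "y = g * b" by blast
        hence "y \<in> B" using gB sub unfolding is_subring_def by auto
        moreover have "y \<in> rann UNIV (ppow x n)" using r b by auto
        ultimately show "y \<in> rann B (ppow x n)" unfolding rann_def by auto
      qed
    qed
    thus "\<exists>n>0. \<exists>g\<in>B. projection star g \<and> rann B (ppow x n) = (\<lambda>t. g * t) ` B"
      using n gB pg by blast
  qed
  show ?thesis using P1 P2 by blast
qed

end
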